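(* Let $C\in\mathcal C_n$, $A=\Xi^{-1}(C)$ and $L_{ij}=\sum_{k=1}^n kA_{i,j,k}$ for $i,j\in[n]$. Then the length $r(C)$ of any maximal chain in $(\mathcal C_n,\preceq)$ from the minimum element to $C$ equals $$r(C)=\frac{-11n^5+20n^4+10n^3-20n^2+4^{1+(-1)^n}n}{480}+\frac12\sum_{1\le i,j\le n}(i-j)^2(n-L_{ij}).$$
   Context: Let $[n]=\{1,\dots,n\}$, $[0,n]=\{0,\dots,n\}$. A corner-sum hypermatrix of order $n$ is an integer array $C=(C_{i,j,k})_{i,j,k\in[0,n]}$ such that for all $i,j\in[0,n]$: $C_{i,j,0}=C_{i,0,j}=C_{0,i,j}=0$, $C_{i,j,n}=C_{i,n,j}=C_{n,i,j}=ij$, and for all $k\in[n]$ each of $C_{i,j,k}-C_{i,j,k-1}$, $C_{i,k,j}-C_{i,k-1,j}$, $C_{k,i,j}-C_{k-1,i,j}$ is an integer in $\{\max(0,i+j-n),\dots,\min(i,j)\}$. $\mathcal C_n$ is the set of these, ordered by $C\preceq D$ iff $C\ge D$ entrywise; it is a finite distributive lattice with a minimum element. For an array $C$ indexed by $[0,n]^3$, $\Xi^{-1}(C)$ is the array indexed by $[n]^3$ with $\Xi^{-1}(C)_{i,j,k}=C_{i,j,k}-C_{i-1,j,k}-C_{i,j-1,k}-C_{i,j,k-1}+C_{i-1,j-1,k}+C_{i-1,j,k-1}+C_{i,j-1,k-1}-C_{i-1,j-1,k-1}$. *)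

theory Defs
  imports Complex_Main
begin

type_synonym hmat = "nat \<Rightarrow> nat \<Rightarrow> nat \<Rightarrow> int"

definition step_ok :: "nat \<Rightarrow> nat \<Rightarrow> nat \<Rightarrow> int \<Rightarrow> bool" where
  "step_ok n i j d \<longleftrightarrow> max 0 (int i + int j - int n) \<le> d \<and> d \<le> int (min i j)"

(* corner-sum hypermatrices of order n; arrays are indexed by [0,n]^3 and
   (to have a canonical representative) are required to vanish outside *)
definition CSH :: "nat \<Rightarrow> hmat set" where
  "CSH n = {C.
     (\<forall>i j k. (n < i \<or> n < j \<or> n < k) \<longrightarrow> C i j k = 0) \<and>
     (\<forall>i\<le>n. \<forall>j\<le>n.
        C i j 0 = 0 \<and> C i 0 j = 0 \<and> C 0 i j = 0 \<and>
        C i j n = int (i*j) \<and> C i n j = int (i*j) \<and> C n i j = int (i*j) \<and>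
        (\<forall>k\<in>{1..n}.
           step_ok n i j (C i j k - C i j (k-1)) \<and>
           step_ok n i j (C i k j - C i (k-1) j) \<and>
           step_ok n i j (C k i j - C (k-1) i j)))}"

definition csh_le :: "nat \<Rightarrow> hmat \<Rightarrow> hmat \<Rightarrow> bool" where
  "csh_le n C D \<longleftrightarrow> (\<forall>i\<le>n. \<forall>j\<le>n. \<forall>k\<le>n. D i j k \<le> C i j k)"

definition is_chain :: "nat \<Rightarrow> hmat set \<Rightarrow> bool" where
  "is_chain n S \<longleftrightarrow> (\<forall>x\<in>S. \<forall>y\<in>S. csh_le n x y \<or> csh_le n y x)"

(* maximal chains in the interval [min, C] of (CSH n, \<preceq>); since the minimum is
   below everything, this interval is {D \<in> CSH n. D \<preceq> C} *)
definition maximal_chain_to :: "nat \<Rightarrow> hmat \<Rightarrow> hmat set \<Rightarrow> bool" where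
  "maximal_chain_to n C S \<longleftrightarrow>
     (let I = {D \<in> CSH n. csh_le n D C} in
       S \<subseteq> I \<and> is_chain n S \<and> \<not> (\<exists>T. T \<subseteq> I \<and> is_chain n T \<and> S \<subset> T))"

definition Xi_inv :: "hmat \<Rightarrow> hmat" where
  "Xi_inv C i j k = C i j k - C (i-1) j k - C i (j-1) k - C i j (k-1)
      + C (i-1) (j-1) k + C (i-1) j (k-1) + C i (j-1) (k-1) - C (i-1) (j-1) (k-1)"

end

theory Submission
  imports Defs
begin

lemma induct2: "P 0 \<Longrightarrow> P 1 \<Longrightarrow> (\<And>n. P n \<Longrightarrow> P (Suc (Suc n))) \<Longrightarrow> P n"
  by (induction n rule: nat_less_induct) (metis One_nat_def less_Suc_eq not0_implies_Suc)

definition psi :: "nat \<Rightarrow> nat \<Rightarrow> int" where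
  "psi p r = int p * int r * (int (max p r) - 1)"
definition Psi :: "nat \<Rightarrow> int" where
  "Psi s = (\<Sum>p\<in>{0..s}. psi p (s - p))"
definition Yf :: "nat \<Rightarrow> int" where
  "Yf s = (\<Sum>p\<in>{0..s}. int (max p (s - p)))"
definition Wf :: "nat \<Rightarrow> int" where
  "Wf s = (\<Sum>p\<in>{0..s}. int p * int (s - p))"
definition SP :: "nat \<Rightarrow> int" where
  "SP n = (\<Sum>s<n. Psi s)"

lemma sum_lin: "2 * (\<Sum>p\<in>{0..s}. int p) = int s * (int s + 1)"
  by (induction s) (simp_all add: algebra_simps)

lemma sum_sq: "6 * (\<Sum>p\<in>{0..s}. int p ^ 2) = int s * (int s + 1) * (2 * int s + 1)"
  by (induction s) (simp_all add: algebra_simps power2_eq_square)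

lemma W_closed: "6 * Wf s = (int s - 1) * int s * (int s + 1)"
proof -
  have "Wf s = (\<Sum>p\<in>{0..s}. int s * int p - int p ^ 2)"
    unfolding Wf_def by (rule sum.cong) (auto simp: of_nat_diff algebra_simps power2_eq_square)
  also have "\<dots> = int s * (\<Sum>p\<in>{0..s}. int p) - (\<Sum>p\<in>{0..s}. int p ^ 2)"
    by (simp add: sum_subtractf sum_distrib_left)
  finally have "6 * Wf s = 3 * int s * (2 * (\<Sum>p\<in>{0..s}. int p)) - 6 * (\<Sum>p\<in>{0..s}. int p ^ 2)"
    by (simp add: algebra_simps)
  then show ?thesis unfolding sum_lin sum_sq by (simp add: algebra_simps)
qed

lemma Y_rec: "Yf (Suc (Suc s)) = Yf s + 3 * int s + 5"
proof -
  have "Yf (Suc (Suc s)) = int (Suc (Suc s)) + (\<Sum>p\<in>{0..Suc s}. int (max (Suc p) (Suc (Suc s) - Suc p)))"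
    unfolding Yf_def by (subst sum.atLeast0_atMost_Suc_shift) simp
  also have "(\<Sum>p\<in>{0..Suc s}. int (max (Suc p) (Suc (Suc s) - Suc p)))
      = (\<Sum>p\<in>{0..s}. int (max (Suc p) (Suc (Suc s) - Suc p))) + int (s + 2)"
    by (simp add: sum.atLeast0_atMost_Suc)
  also have "(\<Sum>p\<in>{0..s}. int (max (Suc p) (Suc (Suc s) - Suc p))) = (\<Sum>p\<in>{0..s}. int (max p (s - p)) + 1)"
    by (rule sum.cong) (auto simp: Suc_diff_le max_def)
  also have "\<dots> = Yf s + int s + 1" by (simp add: sum.distrib Yf_def)
  finally show ?thesis by simp
qed

lemma Y_closed: "8 * Yf s = 1 + 8 * int s + 6 * int s ^ 2 - (-1) ^ s"
proof (induction s rule: induct2)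
  case 1 show ?case by (simp add: Yf_def)
next
  case 2 show ?case by (simp add: Yf_def)
next
  case (3 n) then show ?case by (simp add: Y_rec algebra_simps power2_eq_square)
qed

lemma Psi_rec: "Psi (Suc (Suc s)) = Psi s + Wf s + (int s + 1) * Yf s"
proof -
  have "Psi (Suc (Suc s)) = (\<Sum>p\<in>{0..Suc s}. psi (Suc p) (Suc (Suc s) - Suc p))"
    unfolding Psi_def by (subst sum.atLeast0_atMost_Suc_shift) (simp add: psi_def)
  also have "\<dots> = (\<Sum>p\<in>{0..s}. psi (Suc p) (Suc (Suc s) - Suc p))"
    by (simp add: sum.atLeast0_atMost_Suc psi_def)
  also have "\<dots> = (\<Sum>p\<in>{0..s}. (int p * int (s - p) * (int (max p (s - p)) - 1) + int p * int (s - p))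
                  + (int s + 1) * int (max p (s - p)))"
    by (rule sum.cong) (auto simp: psi_def Suc_diff_le max_def of_nat_diff algebra_simps)
  also have "\<dots> = Psi s + Wf s + (int s + 1) * Yf s"
    by (simp add: sum.distrib Psi_def Wf_def Yf_def psi_def sum_distrib_left)
  finally show ?thesis .
qed

lemma Psi_closed: "192 * Psi s = 3 + 32 * int s - 34 * int s ^ 2 - 32 * int s ^ 3 + 22 * int s ^ 4
   + (-1) ^ s * (-3 - 6 * int s ^ 2)"
proof (induction s rule: induct2)
  case 1 show ?case by (simp add: Psi_def psi_def)
next
  case 2 show ?case by (simp add: Psi_def psi_def)
next
  case (3 n)
  have w: "6 * Wf n = (int n - 1) * int n * (int n + 1)" by (rule W_closed)
  have y: "8 * Yf n = 1 + 8 * int n + 6 * int n ^ 2 - (-1) ^ n" by (rule Y_closed)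
  have "192 * Psi (Suc (Suc n)) = 192 * Psi n + 32 * (6 * Wf n) + 24 * (int n + 1) * (8 * Yf n)"
    by (simp add: Psi_rec algebra_simps)
  also have "\<dots> = 192 * Psi n + 32 * ((int n - 1) * int n * (int n + 1)) + 24 * (int n + 1) * (1 + 8 * int n + 6 * int n ^ 2 - (-1) ^ n)"
    by (simp only: w y)
  finally have h: "192 * Psi (Suc (Suc n)) = 192 * Psi n + 32 * ((int n - 1) * int n * (int n + 1)) + 24 * (int n + 1) * (1 + 8 * int n + 6 * int n ^ 2 - (-1) ^ n)" .
  have e: "(-1::int) ^ Suc (Suc n) = (-1) ^ n" by simp
  have x: "int (Suc (Suc n)) = int n + 2" by simp
  have poly: "\<And>x e P Q::int. Q = P + 32 * ((x - 1) * x * (x + 1)) + 24 * (x + 1) * (1 + 8 * x + 6 * x ^ 2 - e) \<Longrightarrow> P = 3 + 32 * x - 34 * x^2 - 32 * x ^ 3 + 22 * x ^ 4 + e * (- 3 - 6 * x^2) \<Longrightarrow>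
   Q = 3 + 32 * (x + 2) - 34 * (x + 2)^2 - 32 * (x + 2) ^ 3 + 22 * (x + 2) ^ 4 + e * (- 3 - 6 * (x+2)^2)"
    by algebra
  show ?case unfolding e x by (rule poly[OF h 3])
qed

lemma SP_closed: "1920 * SP n = -15 - 194 * int n + 250 * int n ^ 2 + 120 * int n ^ 3 - 190 * int n ^ 4
   + 44 * int n ^ 5 + (-1) ^ n * (15 - 30 * int n + 30 * int n ^ 2)"
proof (induction n)
  case 0 show ?case by (simp add: SP_def)
next
  case (Suc n)
  have "1920 * SP (Suc n) = 1920 * SP n + 10 * (192 * Psi n)" by (simp add: SP_def algebra_simps)
  have e: "(-1::int) ^ Suc n = - ((-1) ^ n)" by simp
  have x: "int (Suc n) = int n + 1" by simp
  have poly: "\<And>x e P Q R::int. R = Q + 10 * P \<Longrightarrow> P = 3 + 32 * x - 34 * x^2 - 32 * x ^ 3 + 22 * x ^ 4 + e * (- 3 - 6 * x^2) \<Longrightarrow>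
     Q = -15 - 194 * x + 250 * x ^ 2 + 120 * x ^ 3 - 190 * x ^ 4 + 44 * x ^ 5 + e * (15 - 30 * x + 30 * x ^ 2) \<Longrightarrow>
     R = -15 - 194 * (x+1) + 250 * (x+1) ^ 2 + 120 * (x+1) ^ 3 - 190 * (x+1) ^ 4 + 44 * (x+1) ^ 5 + (- e) * (15 - 30 * (x+1) + 30 * (x+1) ^ 2)"
    by algebra
  show ?case unfolding e x by (rule poly[OF _ Psi_closed[of n] Suc]) fact
qed


definition Mx :: "nat \<Rightarrow> hmat" where
  "Mx n i j k = (if i \<le> n \<and> j \<le> n \<and> k \<le> n then
     min (min (int i * int j) (int j * int k))
         (min (int k * int i) (int i * int j + int j * int k + int k * int i - int n * (int i + int j + int k) + int n ^ 2))
     else 0)"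

lemma min4_a: "(m::int) = a \<Longrightarrow> m \<le> b \<Longrightarrow> m \<le> c \<Longrightarrow> m \<le> d \<Longrightarrow> min (min a b) (min c d) = m"
  by (simp add: min_def)
lemma min4_c: "(m::int) = c \<Longrightarrow> m \<le> a \<Longrightarrow> m \<le> b \<Longrightarrow> m \<le> d \<Longrightarrow> min (min a b) (min c d) = m"
  by (simp add: min_def)
lemma min4_d: "(m::int) = d \<Longrightarrow> m \<le> a \<Longrightarrow> m \<le> b \<Longrightarrow> m \<le> c \<Longrightarrow> min (min a b) (min c d) = m"
  by (simp add: min_def)

lemma core_formula:
  fixes I J K N :: int
  assumes "0 \<le> I" "I \<le> J" "J \<le> N" "0 \<le> K" "K \<le> N"
  shows "min (min (I * J) (J * K)) (min (K * I) (I * J + J * K + K * I - N * (I + J + K) + N ^ 2))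
       = K * I - max 0 (K + max I (N - J) - N) * min I (N - J)"
proof -
  define T where "T = I * J + J * K + K * I - N * (I + J + K) + N ^ 2"
  have f1: "T - I * J = (N - K) * (N - I - J)" unfolding T_def by (simp add: algebra_simps power2_eq_square)
  have f2: "T - K * I = (N - J) * (N - I - K)" unfolding T_def by (simp add: algebra_simps power2_eq_square)
  have f3: "J * K - K * I = K * (J - I)" by (simp add: algebra_simps)
  have f3': "K * (J - I) \<ge> 0" using assms by simp
  have kj: "J * K \<ge> K * I" using f3 f3' by linarith
  show ?thesis
  proof (cases "I + J \<le> N")
    case True
    have "(N - K) * (N - I - J) \<ge> 0" using True assms by simp
    then have tge: "T \<ge> I * J" using f1 by linarith
    have mx: "max I (N - J) = N - J" "min I (N - J) = I" using True by auto
    show ?thesis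
    proof (cases "K \<le> J")
      case True
      have "K * I \<le> J * I" using True assms by (simp add: mult_right_mono)
      then have a: "K * I \<le> I * J" by (simp add: mult.commute)
      have l: "min (min (I * J) (J * K)) (min (K * I) T) = K * I"
        by (rule min4_c) (use a kj tge in linarith)+
      have r: "max 0 (K + (N - J) - N) = 0" using True by simp
      show ?thesis unfolding T_def[symmetric] l mx r by simp
    next
      case False
      have "J * I \<le> K * I" using False assms by (simp add: mult_right_mono)
      then have a: "I * J \<le> K * I" by (simp add: mult.commute)
      have l: "min (min (I * J) (J * K)) (min (K * I) T) = I * J"
        by (rule min4_a) (use a kj tge in linarith)+
      have r: "max 0 (K + (N - J) - N) = K - J" using False by simp
      have e: "K * I - (K - J) * I = I * J" by (simp add: algebra_simps)
      show ?thesis unfolding T_def[symmetric] l mx r e by simp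
    qed
  next
    case False
    have "(N - K) * (N - I - J) \<le> 0" using False assms by (simp add: mult_nonneg_nonpos)
    then have tle: "T \<le> I * J" using f1 by linarith
    have mx: "max I (N - J) = I" "min I (N - J) = N - J" using False by auto
    show ?thesis
    proof (cases "K + I \<le> N")
      case True
      have "(N - J) * (N - I - K) \<ge> 0" using True assms by simp
      then have a: "K * I \<le> T" using f2 by linarith
      have l: "min (min (I * J) (J * K)) (min (K * I) T) = K * I"
        by (rule min4_c) (use a kj tle in linarith)+
      have r: "max 0 (K + I - N) = 0" using True by simp
      show ?thesis unfolding T_def[symmetric] l mx r by simp
    next
      case False
      have "(N - J) * (N - I - K) \<le> 0" using False assms by (simp add: mult_nonneg_nonpos)
      then have a: "T \<le> K * I" using f2 by linarith
      have l: "min (min (I * J) (J * K)) (min (K * I) T) = T"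
        by (rule min4_d) (use a kj tle in linarith)+
      have r: "max 0 (K + I - N) = K + I - N" using False by simp
      have e: "K * I - (K + I - N) * (N - J) = T" using f2 by (simp add: algebra_simps)
      show ?thesis unfolding T_def[symmetric] l mx r e by simp
    qed
  qed
qed

lemma Mx_sym1: "Mx n i j k = Mx n j i k"
  unfolding Mx_def by (auto simp: algebra_simps min.commute min.left_commute min.assoc)
lemma Mx_sym2: "Mx n i j k = Mx n i k j"
  unfolding Mx_def by (auto simp: algebra_simps min.commute min.left_commute min.assoc)

lemma Mx_formula:
  assumes "i \<le> n" "j \<le> n" "k \<le> n"
  shows "Mx n i j k = int k * int (min i j)
     - max 0 (int k + int (max (min i j) (n - max i j)) - int n) * int (min (min i j) (n - max i j))"
proof -
  have *: "Mx n i j k = int k * int (min i j)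
     - max 0 (int k + int (max (min i j) (n - max i j)) - int n) * int (min (min i j) (n - max i j))"
    if "i \<le> j" "i \<le> n" "j \<le> n" "k \<le> n" for i j
  proof -
    have "Mx n i j k = int k * int i - max 0 (int k + max (int i) (int n - int j) - int n) * min (int i) (int n - int j)"
      using core_formula[of "int i" "int j" "int n" "int k"] that by (simp add: Mx_def)
    moreover have "int (max i (n - j)) = max (int i) (int n - int j)" "int (min i (n - j)) = min (int i) (int n - int j)"
      using that by auto
    ultimately show ?thesis using that by (simp add: min_def max_def)
  qed
  show ?thesis
  proof (cases "i \<le> j")
    case True then show ?thesis using * assms by blast
  next
    case False
    then have "Mx n j i k = int k * int (min j i)
     - max 0 (int k + int (max (min j i) (n - max j i)) - int n) * int (min (min j i) (n - max j i))"
      using * assms by simp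
    then show ?thesis by (simp add: Mx_sym1 min.commute max.commute)
  qed
qed


lemma CSH_D:
  assumes "C \<in> CSH n"
  shows "\<And>i j k. n < i \<or> n < j \<or> n < k \<Longrightarrow> C i j k = 0"
    and "\<And>i j. i \<le> n \<Longrightarrow> j \<le> n \<Longrightarrow> C i j 0 = 0 \<and> C i 0 j = 0 \<and> C 0 i j = 0"
    and "\<And>i j. i \<le> n \<Longrightarrow> j \<le> n \<Longrightarrow> C i j n = int (i*j) \<and> C i n j = int (i*j) \<and> C n i j = int (i*j)"
    and "\<And>i j k. i \<le> n \<Longrightarrow> j \<le> n \<Longrightarrow> 1 \<le> k \<Longrightarrow> k \<le> n \<Longrightarrow>
           step_ok n i j (C i j k - C i j (k-1)) \<and>
           step_ok n i j (C i k j - C i (k-1) j) \<and>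
           step_ok n i j (C k i j - C (k-1) i j)"
  using assms unfolding CSH_def by auto

lemma line_bound:
  fixes g :: "nat \<Rightarrow> int"
  assumes "\<And>k. 1 \<le> k \<Longrightarrow> k \<le> n \<Longrightarrow> lo \<le> g k - g (k-1) \<and> g k - g (k-1) \<le> hi"
    and "a \<le> b" "b \<le> n"
  shows "int (b-a) * lo \<le> g b - g a \<and> g b - g a \<le> int (b-a) * hi"
  using assms(2,3)
proof (induction b)
  case 0 then show ?case by simp
next
  case (Suc b)
  show ?case
  proof (cases "a \<le> b")
    case True
    have ih: "int (b-a) * lo \<le> g b - g a \<and> g b - g a \<le> int (b-a) * hi" using Suc True by simp
    have st: "lo \<le> g (Suc b) - g b \<and> g (Suc b) - g b \<le> hi" using assms(1)[of "Suc b"] Suc by simp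
    have e: "int (Suc b - a) = int (b - a) + 1" using True by simp
    show ?thesis unfolding e using ih st by (simp add: algebra_simps)
  next
    case False
    then have "a = Suc b" using Suc by simp
    then show ?thesis by simp
  qed
qed

lemma step_okD: "step_ok n i j d \<Longrightarrow> max 0 (int i + int j - int n) \<le> d \<and> d \<le> int (min i j)"
  unfolding step_ok_def by simp


lemma Mx_step3:
  assumes "i \<le> n" "j \<le> n" "1 \<le> k" "k \<le> n"
  shows "step_ok n i j (Mx n i j k - Mx n i j (k-1))"
proof -
  define P where "P = int (min i j)"
  define U where "U = int (max (min i j) (n - max i j))"
  define L where "L = int (min (min i j) (n - max i j))"
  obtain k' where k': "k = Suc k'" using assms(3) by (cases k) auto
  have a: "Mx n i j k = int k * P - max 0 (int k + U - int n) * L"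
    unfolding P_def U_def L_def by (rule Mx_formula) (use assms in auto)
  have b: "Mx n i j (k-1) = int k' * P - max 0 (int k' + U - int n) * L"
    unfolding P_def U_def L_def k' diff_Suc_1 by (rule Mx_formula) (use assms k' in auto)
  have m: "max 0 (int k + U - int n) = max 0 (int k' + U - int n) + (if int k + U - int n \<ge> 1 then 1 else 0)"
    unfolding k' by (simp add: max_def)
  have d: "Mx n i j k - Mx n i j (k-1) = P - (if int k + U - int n \<ge> 1 then 1 else 0) * L"
    unfolding a b m unfolding k' by (simp add: algebra_simps)
  have L0: "0 \<le> L" unfolding L_def by simp
  have PL: "P - L = max 0 (int i + int j - int n)"
    unfolding P_def L_def using assms by (cases "i \<le> j") (auto simp: min_def max_def)
  have "max 0 (int i + int j - int n) \<le> P" unfolding P_def using assms by (cases "i \<le> j") (auto simp: min_def max_def)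
  then show ?thesis unfolding step_ok_def d P_def[symmetric] using L0 PL by auto
qed

lemma Mx_zero: "i \<le> n \<Longrightarrow> j \<le> n \<Longrightarrow> Mx n i j 0 = 0"
  using Mx_formula[of i n j 0] by (auto simp: max_def)

lemma Mx_top: assumes "i \<le> n" "j \<le> n" shows "Mx n i j n = int (i * j)"
proof -
  have T: "int i * int j + int j * int n + int n * int i - int n * (int i + int j + int n) + int n ^ 2 = int i * int j"
    by (simp add: algebra_simps power2_eq_square)
  have "int i * int j \<le> int n * int j" using assms by (simp add: mult_right_mono)
  then have "int i * int j \<le> int j * int n" by (simp add: mult.commute)
  moreover have "int i * int j \<le> int i * int n" using assms by (simp add: mult_left_mono)
  then have "int i * int j \<le> int n * int i" by (simp add: mult.commute)
  moreover have "Mx n i j n = min (min (int i * int j) (int j * int n)) (min (int n * int i) (int i * int j))"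
    unfolding Mx_def T using assms by simp
  ultimately show ?thesis by (simp add: min_def)
qed

lemma Mx_CSH: "Mx n \<in> CSH n"
  unfolding CSH_def
proof (intro CollectI conjI allI impI ballI)
  fix i j k assume "n < i \<or> n < j \<or> n < k" then show "Mx n i j k = 0" by (auto simp: Mx_def)
next
  fix i j assume ij: "i \<le> n" "j \<le> n"
  show "Mx n i j 0 = 0" using ij by (rule Mx_zero)
  show "Mx n i 0 j = 0" using ij Mx_zero Mx_sym2 by metis
  show "Mx n 0 i j = 0" using ij Mx_zero Mx_sym2 Mx_sym1 by metis
  show "Mx n i j n = int (i * j)" using ij by (rule Mx_top)
  show "Mx n i n j = int (i * j)" using ij Mx_top Mx_sym2 by metis
  show "Mx n n i j = int (i * j)" using ij Mx_top Mx_sym2 Mx_sym1 by metis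
  fix k assume k: "k \<in> {1..n}"
  show "step_ok n i j (Mx n i j k - Mx n i j (k - 1))" using ij k Mx_step3 by auto
  show "step_ok n i j (Mx n i k j - Mx n i (k - 1) j)" using ij k Mx_step3 Mx_sym2 by (metis atLeastAtMost_iff)
  show "step_ok n i j (Mx n k i j - Mx n (k - 1) i j)" using ij k Mx_step3 Mx_sym2 Mx_sym1 by (metis atLeastAtMost_iff)
qed

lemma CSH_lines:
  assumes C: "C \<in> CSH n" and "i \<le> n" "j \<le> n" "1 \<le> k" "k \<le> n"
  shows "max 0 (int i + int j - int n) \<le> C i j k - C i j (k-1) \<and> C i j k - C i j (k-1) \<le> int (min i j)"
    and "max 0 (int i + int j - int n) \<le> C i k j - C i (k-1) j \<and> C i k j - C i (k-1) j \<le> int (min i j)"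
    and "max 0 (int i + int j - int n) \<le> C k i j - C (k-1) i j \<and> C k i j - C (k-1) i j \<le> int (min i j)"
  using CSH_D(4)[OF C assms(2-5)] by (auto dest: step_okD)

lemma CSH_upper:
  assumes C: "C \<in> CSH n" and ijk: "i \<le> n" "j \<le> n" "k \<le> n"
  shows "C i j k \<le> Mx n i j k" and "0 \<le> C i j k" and "C i j k \<le> int (n * n)"
proof -
  have l3: "int (b-a) * max 0 (int i + int j - int n) \<le> C i j b - C i j a \<and> C i j b - C i j a \<le> int (b-a) * int (min i j)"
    if "a \<le> b" "b \<le> n" for a b
    by (rule line_bound[OF _ that]) (rule CSH_lines(1)[OF C ijk(1,2)])
  have l1: "C a j k - C 0 j k \<le> int a * int (min j k)" if "a \<le> n" for a
    using line_bound[of n "max 0 (int j + int k - int n)" "\<lambda>a. C a j k" "int (min j k)" 0 a]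
      CSH_lines(3)[OF C ijk(2,3)] that by auto
  have l2: "C i b k - C i 0 k \<le> int b * int (min i k)" if "b \<le> n" for b
    using line_bound[of n "max 0 (int i + int k - int n)" "\<lambda>b. C i b k" "int (min i k)" 0 b]
      CSH_lines(2)[OF C ijk(1,3)] that by auto
  have z: "C i j 0 = 0" "C 0 j k = 0" "C i 0 k = 0" using CSH_D(2)[OF C] ijk by auto
  have top: "C i j n = int (i*j)" using CSH_D(3)[OF C] ijk by auto
  have a1: "C i j k \<le> int k * int (min i j)" using l3[of 0 k] z ijk by simp
  have "0 \<le> int k * max 0 (int i + int j - int n)" by simp
  moreover have "int k * max 0 (int i + int j - int n) \<le> C i j k" using l3[of 0 k] z ijk by simp
  ultimately have a0: "0 \<le> C i j k" by linarith
  have b1: "C i j n - C i j k \<ge> int (n - k) * max 0 (int i + int j - int n)" using l3[of k n] ijk by simp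
  have c1: "C i j k \<le> int i * int (min j k)" using l1[of i] z ijk by simp
  have d1: "C i j k \<le> int j * int (min i k)" using l2[of j] z ijk by simp
  have e1: "int k * int (min i j) \<le> int k * int i" by (simp add: mult_left_mono)
  have e2: "int i * int (min j k) \<le> int i * int j" by (simp add: mult_left_mono)
  have e3: "int j * int (min i k) \<le> int j * int k" by (simp add: mult_left_mono)
  have e4: "int (n - k) * max 0 (int i + int j - int n) \<ge> int (n - k) * (int i + int j - int n)"
    by (simp add: mult_left_mono)
  have e5: "int i * int j - int (n - k) * (int i + int j - int n)
     = int i * int j + int j * int k + int k * int i - int n * (int i + int j + int k) + int n ^ 2"
    using ijk by (simp add: of_nat_diff algebra_simps power2_eq_square)
  have "C i j k \<le> int i * int j + int j * int k + int k * int i - int n * (int i + int j + int k) + int n ^ 2"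
    using b1 e4 e5 top by simp
  then show "C i j k \<le> Mx n i j k" unfolding Mx_def using ijk a1 c1 d1 e1 e2 e3 by simp
  show "0 \<le> C i j k" by (rule a0)
  have "int i * int j \<le> int n * int n" using ijk by (simp add: mult_mono)
  then show "C i j k \<le> int (n * n)" using c1 e2 by simp
qed


definition bump :: "hmat \<Rightarrow> nat \<times> nat \<times> nat \<Rightarrow> hmat" where
  "bump X p i j k = X i j k + (if (i, j, k) = p then 1 else 0)"

lemma step_bump:
  assumes s1: "step_ok n i j (x1 - x0)" and s2: "step_ok n i j (y1 - y0)"
    and "x0 \<le> y0" "x1 \<le> y1"
    and "e1 \<Longrightarrow> x1 < y1" "e0 \<Longrightarrow> x0 < y0" "\<not> (e1 \<and> e0)"
    and m1: "e1 \<Longrightarrow> x0 < y0 \<Longrightarrow> int n * (x1 - x0) \<le> int i * int j"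
    and m0: "e0 \<Longrightarrow> x1 < y1 \<Longrightarrow> int i * int j \<le> int n * (x1 - x0)"
    and int: "e1 \<or> e0 \<Longrightarrow> 1 \<le> i \<and> i < n \<and> 1 \<le> j \<and> j < n"
  shows "step_ok n i j ((x1 + (if e1 then 1 else 0)) - (x0 + (if e0 then 1 else 0)))"
proof -
  have A: "max 0 (int i + int j - int n) \<le> x1 - x0" "x1 - x0 \<le> int (min i j)"
    using s1 unfolding step_ok_def by auto
  have B: "max 0 (int i + int j - int n) \<le> y1 - y0" "y1 - y0 \<le> int (min i j)"
    using s2 unfolding step_ok_def by auto
  show ?thesis
  proof (cases e1)
    case True
    then have ne0: "\<not> e0" using assms by auto
    have ii: "1 \<le> i" "i < n" "1 \<le> j" "j < n" using int True by auto
    have "x1 - x0 < int (min i j)"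
    proof (rule ccontr)
      assume "\<not> x1 - x0 < int (min i j)"
      then have h: "x1 - x0 = int (min i j)" using A by simp
      have "x0 < y0" using B h assms(4,5) True by linarith
      then have le: "int n * int (min i j) \<le> int i * int j" using m1 True h by simp
      have eq: "int i * int j = int (min i j) * int (max i j)" by (cases "i \<le> j") (auto simp: mult.commute)
      have "int (min i j) * int (max i j) < int (min i j) * int n"
        using ii by (intro mult_strict_left_mono) auto
      then show False using le eq by (simp add: mult.commute)
    qed
    then show ?thesis using A True ne0 unfolding step_ok_def by auto
  next
    case False
    show ?thesis
    proof (cases e0)
      case True
      have ii: "1 \<le> i" "i < n" "1 \<le> j" "j < n" using int True by auto
      have "x1 - x0 > max 0 (int i + int j - int n)"
      proof (rule ccontr)
        assume "\<not> x1 - x0 > max 0 (int i + int j - int n)"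
        then have h: "x1 - x0 = max 0 (int i + int j - int n)" using A(1) by linarith
        have "x1 < y1" using B h assms(3,6) True by linarith
        then have le: "int i * int j \<le> int n * max 0 (int i + int j - int n)" using m0 True h by simp
        have pos: "0 < (int n - int i) * (int n - int j)" using ii by simp
        have "0 < int i * int j" using ii by simp
        moreover have "int n * (int i + int j - int n) = int i * int j - (int n - int i) * (int n - int j)"
          by (simp add: algebra_simps)
        ultimately show False using le pos by (auto simp: max_def split: if_splits)
      qed
      then show ?thesis using A True False unfolding step_ok_def by auto
    next
      case False
      then show ?thesis using s1 \<open>\<not> e1\<close> by simp
    qed
  qed
qed


lemma CSH_ext: "C \<in> CSH n \<Longrightarrow> D \<in> CSH n \<Longrightarrow> (\<And>i j k. i \<le> n \<Longrightarrow> j \<le> n \<Longrightarrow> k \<le> n \<Longrightarrow> C i j k = D i j k) \<Longrightarrow> C = D"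
proof (intro ext)
  fix i j k assume C: "C \<in> CSH n" and D: "D \<in> CSH n" and h: "\<And>i j k. i \<le> n \<Longrightarrow> j \<le> n \<Longrightarrow> k \<le> n \<Longrightarrow> C i j k = D i j k"
  show "C i j k = D i j k"
  proof (cases "i \<le> n \<and> j \<le> n \<and> k \<le> n")
    case True then show ?thesis using h by auto
  next
    case False then show ?thesis using CSH_D(1)[OF C] CSH_D(1)[OF D] by auto
  qed
qed

lemma bump_exists:
  assumes C: "C \<in> CSH n" and D: "D \<in> CSH n" and le: "csh_le n D C" and ne: "C \<noteq> D"
  shows "\<exists>a b c. bump C (a, b, c) \<in> CSH n \<and> csh_le n D (bump C (a, b, c))
            \<and> 1 \<le> a \<and> a < n \<and> 1 \<le> b \<and> b < n \<and> 1 \<le> c \<and> c < n"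
proof -
  have le': "\<And>i j k. i \<le> n \<Longrightarrow> j \<le> n \<Longrightarrow> k \<le> n \<Longrightarrow> C i j k \<le> D i j k"
    using le unfolding csh_le_def by auto
  define box where "box = {0..n} \<times> {0..n} \<times> {0..n}"
  define Cq where "Cq = (\<lambda>(i, j, k). C i j k)"
  define Dq where "Dq = (\<lambda>(i, j, k). D i j k)"
  define X where "X = {q \<in> box. Cq q < Dq q}"
  have finX: "finite X" unfolding X_def box_def by auto
  obtain i0 j0 k0 where d: "i0 \<le> n" "j0 \<le> n" "k0 \<le> n" "C i0 j0 k0 \<noteq> D i0 j0 k0"
    using ne CSH_ext[OF C D] by blast
  have "(i0, j0, k0) \<in> X" using d le'[of i0 j0 k0] unfolding X_def box_def Cq_def Dq_def by auto
  then have Xne: "X \<noteq> {}" by auto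
  define Ps where "Ps = (\<lambda>(i, j, k). int n * C i j k - int i * int j * int k)"
  define p where "p = arg_min_on Ps X"
  have pX: "p \<in> X" unfolding p_def using arg_min_if_finite(1)[OF finX Xne] .
  have pmin: "\<And>q. q \<in> X \<Longrightarrow> Ps p \<le> Ps q"
    using arg_min_if_finite(2)[OF finX Xne] unfolding p_def by (meson not_less)
  obtain a b c where p: "p = (a, b, c)" by (cases p) auto
  have abc: "a \<le> n" "b \<le> n" "c \<le> n" "C a b c < D a b c"
    using pX unfolding p X_def box_def Cq_def Dq_def by auto
  have a0: "a \<noteq> 0"
  proof
    assume "a = 0"
    then show False using abc CSH_D(2)[OF C, of b c] CSH_D(2)[OF D, of b c] by auto
  qed
  have an: "a \<noteq> n"
  proof
    assume "a = n"
    then show False using abc CSH_D(3)[OF C, of b c] CSH_D(3)[OF D, of b c] by auto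
  qed
  have b0: "b \<noteq> 0"
  proof
    assume "b = 0"
    then show False using abc CSH_D(2)[OF C, of a c] CSH_D(2)[OF D, of a c] by auto
  qed
  have bn: "b \<noteq> n"
  proof
    assume "b = n"
    then show False using abc CSH_D(3)[OF C, of a c] CSH_D(3)[OF D, of a c] by auto
  qed
  have c0: "c \<noteq> 0"
  proof
    assume "c = 0"
    then show False using abc CSH_D(2)[OF C, of a b] CSH_D(2)[OF D, of a b] by auto
  qed
  have cn: "c \<noteq> n"
  proof
    assume "c = n"
    then show False using abc CSH_D(3)[OF C, of a b] CSH_D(3)[OF D, of a b] by auto
  qed
  define C' where "C' = bump C (a, b, c)"
  define Cq' where "Cq' = (\<lambda>(i, j, k). C' i j k)"
  have Cq': "\<And>q. Cq' q = Cq q + (if q = p then 1 else 0)"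
    unfolding Cq'_def Cq_def C'_def bump_def p by (case_tac q) auto
  have gen: "step_ok n i j (Cq' q1 - Cq' q0)"
    if "q1 \<in> box" "q0 \<in> box" "q1 \<noteq> q0"
       "Ps q1 - Ps q0 = int n * (Cq q1 - Cq q0) - int i * int j"
       "q1 = p \<or> q0 = p \<Longrightarrow> 1 \<le> i \<and> i < n \<and> 1 \<le> j \<and> j < n"
       "step_ok n i j (Cq q1 - Cq q0)" "step_ok n i j (Dq q1 - Dq q0)"
     for i j q1 q0
  proof -
    have lq: "Cq q \<le> Dq q" if "q \<in> box" for q using that le' unfolding box_def Cq_def Dq_def by auto
    have pl: "Cq p < Dq p" using pX unfolding X_def by auto
    have "step_ok n i j ((Cq q1 + (if q1 = p then 1 else 0)) - (Cq q0 + (if q0 = p then 1 else 0)))"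
    proof (rule step_bump[OF that(6) that(7) lq[OF that(2)] lq[OF that(1)]])
      show "q1 = p \<Longrightarrow> Cq q1 < Dq q1" using pl by simp
      show "q0 = p \<Longrightarrow> Cq q0 < Dq q0" using pl by simp
      show "\<not> (q1 = p \<and> q0 = p)" using that(3) by auto
      show "int n * (Cq q1 - Cq q0) \<le> int i * int j" if "q1 = p" "Cq q0 < Dq q0"
      proof -
        have "q0 \<in> X" using that \<open>q0 \<in> box\<close> unfolding X_def by auto
        then have "Ps p \<le> Ps q0" by (rule pmin)
        then show ?thesis using \<open>Ps q1 - Ps q0 = _\<close> that by simp
      qed
      show "int i * int j \<le> int n * (Cq q1 - Cq q0)" if "q0 = p" "Cq q1 < Dq q1"
      proof -
        have "q1 \<in> X" using that \<open>q1 \<in> box\<close> unfolding X_def by auto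
        then have "Ps p \<le> Ps q1" by (rule pmin)
        then show ?thesis using \<open>Ps q1 - Ps q0 = _\<close> that by simp
      qed
      show "q1 = p \<or> q0 = p \<Longrightarrow> 1 \<le> i \<and> i < n \<and> 1 \<le> j \<and> j < n" by (rule that(5))
    qed
    then show ?thesis unfolding Cq' by simp
  qed
  have C'CSH: "C' \<in> CSH n"
    unfolding CSH_def
  proof (intro CollectI conjI allI impI ballI)
    fix i j k assume "n < i \<or> n < j \<or> n < k"
    then show "C' i j k = 0" using CSH_D(1)[OF C] abc unfolding C'_def bump_def by auto
  next
    fix i j assume ij: "i \<le> n" "j \<le> n"
    show "C' i j 0 = 0" "C' i 0 j = 0" "C' 0 i j = 0"
      using CSH_D(2)[OF C ij] a0 b0 c0 unfolding C'_def bump_def by auto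
    show "C' i j n = int (i * j)" "C' i n j = int (i * j)" "C' n i j = int (i * j)"
      using CSH_D(3)[OF C ij] an bn cn unfolding C'_def bump_def by auto
    fix k assume k: "k \<in> {1..n}"
    have k1: "1 \<le> k" "k \<le> n" using k by auto
    have ik: "int (k - 1) = int k - 1" using k1 by simp
    have sC: "step_ok n i j (C i j k - C i j (k-1)) \<and> step_ok n i j (C i k j - C i (k-1) j) \<and> step_ok n i j (C k i j - C (k-1) i j)"
      using CSH_D(4)[OF C ij k1] .
    have sD: "step_ok n i j (D i j k - D i j (k-1)) \<and> step_ok n i j (D i k j - D i (k-1) j) \<and> step_ok n i j (D k i j - D (k-1) i j)"
      using CSH_D(4)[OF D ij k1] .
    have pa: "1 \<le> a" "a < n" "1 \<le> b" "b < n" "1 \<le> c" "c < n" using abc an bn cn a0 b0 c0 by auto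
    have "step_ok n i j (Cq' (i, j, k) - Cq' (i, j, k - 1))"
      by (rule gen) (use ij k1 sC sD pa in \<open>auto simp: Cq_def Dq_def Ps_def box_def p ik algebra_simps\<close>)
    then show "step_ok n i j (C' i j k - C' i j (k - 1))" by (simp add: Cq'_def)
    have "step_ok n i j (Cq' (i, k, j) - Cq' (i, k - 1, j))"
      by (rule gen) (use ij k1 sC sD pa in \<open>auto simp: Cq_def Dq_def Ps_def box_def p ik algebra_simps\<close>)
    then show "step_ok n i j (C' i k j - C' i (k - 1) j)" by (simp add: Cq'_def)
    have "step_ok n i j (Cq' (k, i, j) - Cq' (k - 1, i, j))"
      by (rule gen) (use ij k1 sC sD pa in \<open>auto simp: Cq_def Dq_def Ps_def box_def p ik algebra_simps\<close>)
    then show "step_ok n i j (C' k i j - C' (k - 1) i j)" by (simp add: Cq'_def)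
  qed
  have "csh_le n D C'"
    unfolding csh_le_def C'_def bump_def using le' abc p by auto
  then show ?thesis using C'CSH a0 an b0 bn c0 cn abc unfolding C'_def
    by (intro exI[of _ a] exI[of _ b] exI[of _ c]) auto
qed


definition Phi :: "nat \<Rightarrow> hmat \<Rightarrow> int" where
  "Phi n X = (\<Sum>i\<in>{1..<n}. \<Sum>j\<in>{1..<n}. \<Sum>k\<in>{1..<n}. X i j k)"

lemma finite_CSH: "finite (CSH n)"
proof -
  define box where "box = {0..n} \<times> {0..n} \<times> {0..n}"
  define F where "F = {f :: nat \<times> nat \<times> nat \<Rightarrow> int. \<forall>x. (x \<in> box \<longrightarrow> f x \<in> {0..int (n*n)}) \<and> (x \<notin> box \<longrightarrow> f x = 0)}"
  define g where "g = (\<lambda>(f :: nat \<times> nat \<times> nat \<Rightarrow> int) (i::nat) (j::nat) (k::nat). if i \<le> n \<and> j \<le> n \<and> k \<le> n then f (i, j, k) else 0)"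
  have "finite F" unfolding F_def box_def by (intro finite_set_of_finite_funs) auto
  moreover have "CSH n \<subseteq> g ` F"
  proof
    fix C assume C: "C \<in> CSH n"
    define f where "f = (\<lambda>(i, j, k). if i \<le> n \<and> j \<le> n \<and> k \<le> n then C i j k else 0)"
    have "f \<in> F" unfolding F_def f_def box_def using CSH_upper(2,3)[OF C] by auto
    moreover have "C = g f" unfolding g_def f_def using CSH_D(1)[OF C] by (auto intro!: ext)
    ultimately show "C \<in> g ` F" by blast
  qed
  ultimately show ?thesis by (meson finite_imageI finite_subset)
qed

lemma csh_le_refl: "csh_le n x x" unfolding csh_le_def by auto
lemma csh_le_trans: "csh_le n x y \<Longrightarrow> csh_le n y z \<Longrightarrow> csh_le n x z" unfolding csh_le_def by (meson order.trans)

lemma Phi_mono: "csh_le n x y \<Longrightarrow> Phi n y \<le> Phi n x"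
  unfolding Phi_def csh_le_def by (intro sum_mono) auto

lemma CSH_boundary_eq:
  assumes "x \<in> CSH n" "y \<in> CSH n" "i \<le> n" "j \<le> n" "k \<le> n" "x i j k \<noteq> y i j k"
  shows "1 \<le> i \<and> i < n \<and> 1 \<le> j \<and> j < n \<and> 1 \<le> k \<and> k < n"
proof -
  have "i \<noteq> 0"
  proof
    assume "i = 0"
    then show False using CSH_D(2)[OF assms(1), of j k] CSH_D(2)[OF assms(2), of j k] assms by auto
  qed
  moreover have "i \<noteq> n"
  proof
    assume "i = n"
    then show False using CSH_D(3)[OF assms(1), of j k] CSH_D(3)[OF assms(2), of j k] assms by auto
  qed
  moreover have "j \<noteq> 0"
  proof
    assume "j = 0"
    then show False using CSH_D(2)[OF assms(1), of i k] CSH_D(2)[OF assms(2), of i k] assms by auto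
  qed
  moreover have "j \<noteq> n"
  proof
    assume "j = n"
    then show False using CSH_D(3)[OF assms(1), of i k] CSH_D(3)[OF assms(2), of i k] assms by auto
  qed
  moreover have "k \<noteq> 0"
  proof
    assume "k = 0"
    then show False using CSH_D(2)[OF assms(1), of i j] CSH_D(2)[OF assms(2), of i j] assms by auto
  qed
  moreover have "k \<noteq> n"
  proof
    assume "k = n"
    then show False using CSH_D(3)[OF assms(1), of i j] CSH_D(3)[OF assms(2), of i j] assms by auto
  qed
  ultimately show ?thesis using assms by auto
qed

lemma Phi_strict:
  assumes x: "x \<in> CSH n" and y: "y \<in> CSH n" and le: "csh_le n x y" and ne: "x \<noteq> y"
  shows "Phi n y < Phi n x"
proof -
  have le': "\<And>i j k. i \<le> n \<Longrightarrow> j \<le> n \<Longrightarrow> k \<le> n \<Longrightarrow> y i j k \<le> x i j k" using le unfolding csh_le_def by auto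
  obtain i0 j0 k0 where d: "i0 \<le> n" "j0 \<le> n" "k0 \<le> n" "x i0 j0 k0 \<noteq> y i0 j0 k0"
    using ne CSH_ext[OF x y] by blast
  have int: "1 \<le> i0 \<and> i0 < n \<and> 1 \<le> j0 \<and> j0 < n \<and> 1 \<le> k0 \<and> k0 < n" using CSH_boundary_eq[OF x y d] .
  have lt: "y i0 j0 k0 < x i0 j0 k0" using le'[OF d(1-3)] d(4) by auto
  have s3: "(\<Sum>k\<in>{1..<n}. y i0 j0 k) < (\<Sum>k\<in>{1..<n}. x i0 j0 k)"
    by (rule sum_strict_mono_ex1) (use le' lt int d in auto)
  have s2: "(\<Sum>j\<in>{1..<n}. \<Sum>k\<in>{1..<n}. y i0 j k) < (\<Sum>j\<in>{1..<n}. \<Sum>k\<in>{1..<n}. x i0 j k)"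
  proof (rule sum_strict_mono_ex1)
    show "\<forall>j\<in>{1..<n}. (\<Sum>k\<in>{1..<n}. y i0 j k) \<le> (\<Sum>k\<in>{1..<n}. x i0 j k)"
      using le' d by (auto intro!: sum_mono)
    show "\<exists>j\<in>{1..<n}. (\<Sum>k\<in>{1..<n}. y i0 j k) < (\<Sum>k\<in>{1..<n}. x i0 j k)"
      using s3 int by auto
  qed simp
  have s1: "(\<Sum>i\<in>{1..<n}. \<Sum>j\<in>{1..<n}. \<Sum>k\<in>{1..<n}. y i j k) < (\<Sum>i\<in>{1..<n}. \<Sum>j\<in>{1..<n}. \<Sum>k\<in>{1..<n}. x i j k)"
  proof (rule sum_strict_mono_ex1)
    show "\<forall>i\<in>{1..<n}. (\<Sum>j\<in>{1..<n}. \<Sum>k\<in>{1..<n}. y i j k) \<le> (\<Sum>j\<in>{1..<n}. \<Sum>k\<in>{1..<n}. x i j k)"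
      using le' by (auto intro!: sum_mono)
    show "\<exists>i\<in>{1..<n}. (\<Sum>j\<in>{1..<n}. \<Sum>k\<in>{1..<n}. y i j k) < (\<Sum>j\<in>{1..<n}. \<Sum>k\<in>{1..<n}. x i j k)"
      using s2 int by auto
  qed simp
  then show ?thesis unfolding Phi_def .
qed

lemma Phi_bump:
  assumes "1 \<le> a" "a < n" "1 \<le> b" "b < n" "1 \<le> c" "c < n"
  shows "Phi n (bump X (a, b, c)) = Phi n X + 1"
proof -
  have "Phi n (bump X (a, b, c)) = Phi n X + (\<Sum>i\<in>{1..<n}. \<Sum>j\<in>{1..<n}. \<Sum>k\<in>{1..<n}. if i = a \<and> j = b \<and> k = c then 1 else 0)"
    unfolding Phi_def bump_def by (simp add: sum.distrib)
  also have "(\<Sum>i\<in>{1..<n}. \<Sum>j\<in>{1..<n}. \<Sum>k\<in>{1..<n}. if i = a \<and> j = b \<and> k = c then 1 else (0::int)) = 1"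
  proof -
    have k: "(\<Sum>k\<in>{1..<n}. if i = a \<and> j = b \<and> k = c then 1 else (0::int)) = (if i = a \<and> j = b then 1 else 0)" for i j
    proof (cases "i = a \<and> j = b")
      case True
      then have "(\<Sum>k\<in>{1..<n}. if i = a \<and> j = b \<and> k = c then 1 else (0::int)) = (\<Sum>k\<in>{1..<n}. if k = c then 1 else 0)" by simp
      also have "\<dots> = 1" using assms by (simp add: sum.delta)
      finally show ?thesis using True by simp
    next
      case False
      then have "\<And>k. (if i = a \<and> j = b \<and> k = c then 1 else (0::int)) = 0" by auto
      then show ?thesis using False by simp
    qed
    have j: "(\<Sum>j\<in>{1..<n}. if i = a \<and> j = b then 1 else (0::int)) = (if i = a then 1 else 0)" for i
    proof (cases "i = a")
      case True
      then have "(\<Sum>j\<in>{1..<n}. if i = a \<and> j = b then 1 else (0::int)) = (\<Sum>j\<in>{1..<n}. if j = b then 1 else 0)" by simp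
      also have "\<dots> = 1" using assms by (simp add: sum.delta)
      finally show ?thesis using True by simp
    next
      case False
      then have "\<And>j. (if i = a \<and> j = b then 1 else (0::int)) = 0" by auto
      then show ?thesis using False by simp
    qed
    have "(\<Sum>i\<in>{1..<n}. if i = a then 1 else (0::int)) = 1" using assms by (simp add: sum.delta)
    then show ?thesis by (simp only: k j)
  qed
  finally show ?thesis .
qed


lemma chain_card:
  assumes C: "C \<in> CSH n" and mc: "maximal_chain_to n C S"
  shows "int (card S) = Phi n (Mx n) - Phi n C + 1"
proof -
  define I where "I = {D \<in> CSH n. csh_le n D C}"
  have SI: "S \<subseteq> I" and ch: "is_chain n S" and mx: "\<not> (\<exists>T. T \<subseteq> I \<and> is_chain n T \<and> S \<subset> T)"
    using mc unfolding maximal_chain_to_def I_def Let_def by auto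
  have ch': "\<And>x y. x \<in> S \<Longrightarrow> y \<in> S \<Longrightarrow> csh_le n x y \<or> csh_le n y x"
    using ch unfolding is_chain_def by auto
  have ICSH: "I \<subseteq> CSH n" unfolding I_def by auto
  have finS: "finite S" using SI ICSH finite_CSH by (meson finite_subset)
  have MxI: "Mx n \<in> I" unfolding I_def csh_le_def using Mx_CSH CSH_upper(1)[OF C] by auto
  have Mx_top: "\<And>x. x \<in> CSH n \<Longrightarrow> csh_le n (Mx n) x" unfolding csh_le_def using CSH_upper(1) by auto
  have CI: "C \<in> I" unfolding I_def using C csh_le_refl by auto
  have C_bot: "\<And>x. x \<in> I \<Longrightarrow> csh_le n x C" unfolding I_def by auto
  have ins_chain: "is_chain n (insert z S)" if "\<And>w. w \<in> S \<Longrightarrow> csh_le n z w \<or> csh_le n w z" for z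
    unfolding is_chain_def using ch' that csh_le_refl by blast
  have MxS: "Mx n \<in> S"
  proof (rule ccontr)
    assume "Mx n \<notin> S"
    moreover have "insert (Mx n) S \<subseteq> I" using SI MxI by auto
    moreover have "is_chain n (insert (Mx n) S)" using Mx_top SI ICSH by (intro ins_chain) auto
    ultimately show False using mx by blast
  qed
  have CS: "C \<in> S"
  proof (rule ccontr)
    assume "C \<notin> S"
    moreover have "insert C S \<subseteq> I" using SI CI by auto
    moreover have "is_chain n (insert C S)" using C_bot SI by (intro ins_chain) auto
    ultimately show False using mx by blast
  qed
  have SCSH: "\<And>x. x \<in> S \<Longrightarrow> x \<in> CSH n" using SI ICSH by auto
  have inj: "inj_on (Phi n) S"
  proof (rule inj_onI)
    fix x y assume xy: "x \<in> S" "y \<in> S" "Phi n x = Phi n y"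
    show "x = y"
    proof (rule ccontr)
      assume ne: "x \<noteq> y"
      from ch'[OF xy(1,2)] show False
      proof
        assume "csh_le n x y" then show False using Phi_strict[OF SCSH[OF xy(1)] SCSH[OF xy(2)] _ ne] xy by simp
      next
        assume "csh_le n y x" then show False using Phi_strict[OF SCSH[OF xy(2)] SCSH[OF xy(1)] _ ne[symmetric]] xy by simp
      qed
    qed
  qed
  have sub: "Phi n ` S \<subseteq> {Phi n C..Phi n (Mx n)}"
  proof
    fix v assume "v \<in> Phi n ` S"
    then obtain x where x: "x \<in> S" "v = Phi n x" by auto
    have "Phi n C \<le> Phi n x" using C_bot[of x] x SI Phi_mono by blast
    moreover have "Phi n x \<le> Phi n (Mx n)" using Mx_top[of x] x SCSH Phi_mono by blast
    ultimately show "v \<in> {Phi n C..Phi n (Mx n)}" using x by auto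
  qed
  have sup: "{Phi n C..Phi n (Mx n)} \<subseteq> Phi n ` S"
  proof
    fix v assume "v \<in> {Phi n C..Phi n (Mx n)}"
    then have v: "Phi n C \<le> v" "v \<le> Phi n (Mx n)" by auto
    show "v \<in> Phi n ` S"
    proof (rule ccontr)
      assume nv: "v \<notin> Phi n ` S"
      define Lo where "Lo = {x \<in> S. Phi n x < v}"
      define Hi where "Hi = {x \<in> S. v < Phi n x}"
      have CLo: "C \<in> Lo" unfolding Lo_def using CS nv v by (metis (mono_tags, lifting) image_eqI mem_Collect_eq order_le_less)
      have MxHi: "Mx n \<in> Hi" unfolding Hi_def using MxS nv v by (metis (mono_tags, lifting) image_eqI mem_Collect_eq order_le_less)
      have finLo: "finite Lo" "Lo \<noteq> {}" using finS CLo unfolding Lo_def by auto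
      have finHi: "finite Hi" "Hi \<noteq> {}" using finS MxHi unfolding Hi_def by auto
      define x0 where "x0 = arg_min_on (\<lambda>x. - Phi n x) Lo"
      define y0 where "y0 = arg_min_on (Phi n) Hi"
      have x0: "x0 \<in> Lo" unfolding x0_def using arg_min_if_finite(1)[OF finLo] .
      have x0max: "\<And>x. x \<in> Lo \<Longrightarrow> Phi n x \<le> Phi n x0"
        using arg_min_if_finite(2)[OF finLo, of "\<lambda>x. - Phi n x"] unfolding x0_def by force
      have y0: "y0 \<in> Hi" unfolding y0_def using arg_min_if_finite(1)[OF finHi] .
      have y0min: "\<And>y. y \<in> Hi \<Longrightarrow> Phi n y0 \<le> Phi n y"
        using arg_min_if_finite(2)[OF finHi, of "Phi n"] unfolding y0_def by force
      have x0S: "x0 \<in> S" "Phi n x0 < v" using x0 unfolding Lo_def by auto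
      have y0S: "y0 \<in> S" "v < Phi n y0" using y0 unfolding Hi_def by auto
      have yx: "csh_le n y0 x0"
      proof -
        have "\<not> csh_le n x0 y0"
        proof
          assume "csh_le n x0 y0"
          then have "Phi n y0 \<le> Phi n x0" by (rule Phi_mono)
          then show False using x0S y0S by simp
        qed
        then show ?thesis using ch'[OF x0S(1) y0S(1)] by auto
      qed
      have nexy: "x0 \<noteq> y0" using x0S y0S by auto
      obtain a b c where z: "bump x0 (a, b, c) \<in> CSH n" "csh_le n y0 (bump x0 (a, b, c))"
          "1 \<le> a" "a < n" "1 \<le> b" "b < n" "1 \<le> c" "c < n"
        using bump_exists[OF SCSH[OF x0S(1)] SCSH[OF y0S(1)] yx nexy] by blast
      define z where "z = bump x0 (a, b, c)"
      have Phiz: "Phi n z = Phi n x0 + 1" unfolding z_def using Phi_bump z(3-8) by blast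
      have zx0: "csh_le n z x0" unfolding z_def csh_le_def bump_def by auto
      have zI: "z \<in> I" unfolding I_def using z(1) csh_le_trans[OF zx0 C_bot[of x0]] x0S SI unfolding z_def by auto
      have znS: "z \<notin> S"
      proof
        assume zS: "z \<in> S"
        then have "Phi n z \<noteq> v" using nv by auto
        then have "Phi n z < v" using Phiz x0S by simp
        then have "z \<in> Lo" unfolding Lo_def using zS by auto
        then show False using x0max Phiz by fastforce
      qed
      have "is_chain n (insert z S)"
      proof (rule ins_chain)
        fix w assume wS: "w \<in> S"
        have "Phi n w \<noteq> v" using nv wS by auto
        then consider "Phi n w < v" | "v < Phi n w" by linarith
        then show "csh_le n z w \<or> csh_le n w z"
        proof cases
          case 1
          then have wLo: "Phi n w \<le> Phi n x0" using x0max wS unfolding Lo_def by auto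
          have "csh_le n x0 w"
          proof (cases "w = x0")
            case True then show ?thesis using csh_le_refl by simp
          next
            case False
            have "\<not> csh_le n w x0"
            proof
              assume "csh_le n w x0"
              then have "Phi n x0 < Phi n w" using Phi_strict[OF SCSH[OF wS] SCSH[OF x0S(1)]] False by auto
              then show False using wLo by simp
            qed
            then show ?thesis using ch'[OF wS x0S(1)] by auto
          qed
          then show ?thesis using csh_le_trans[OF zx0] by blast
        next
          case 2
          then have wHi: "Phi n y0 \<le> Phi n w" using y0min wS unfolding Hi_def by auto
          have "csh_le n w y0"
          proof (cases "w = y0")
            case True then show ?thesis using csh_le_refl by simp
          next
            case False
            have "\<not> csh_le n y0 w"
            proof
              assume "csh_le n y0 w"
              then have "Phi n w < Phi n y0" using Phi_strict[OF SCSH[OF y0S(1)] SCSH[OF wS]] False by auto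
              then show False using wHi by simp
            qed
            then show ?thesis using ch'[OF wS y0S(1)] by auto
          qed
          then show ?thesis using csh_le_trans z(2) unfolding z_def by blast
        qed
      qed
      moreover have "insert z S \<subseteq> I" using SI zI by auto
      moreover have "S \<subset> insert z S" using znS by auto
      ultimately show False using mx by blast
    qed
  qed
  have "Phi n ` S = {Phi n C..Phi n (Mx n)}" using sub sup by auto
  then have "card S = card {Phi n C..Phi n (Mx n)}" using card_image[OF inj] by simp
  moreover have "Phi n C \<le> Phi n (Mx n)" using Phi_mono Mx_top C by blast
  ultimately show ?thesis by simp
qed


lemma tele: "(\<Sum>j\<in>{1..(m::nat)}. h j - h (j-1)) = h m - (h 0 :: int)"
  by (induction m) (auto simp: sum.atLeast_Suc_atMost_Suc_shift)

lemma abel: "(\<Sum>j\<in>{1..(m::nat)}. int j * (h j - h (j-1))) = int m * h m - (\<Sum>j\<in>{0..<m}. (h j :: int))"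
  by (induction m) (auto simp: algebra_simps)

lemma sum_id1: "2 * (\<Sum>i\<in>{1..m}. int i) = int m * (int m + 1)"
  by (induction m) (auto simp: algebra_simps)

lemma sum_id1': "2 * (\<Sum>i\<in>{1..<m}. int i) = int m * (int m - 1)"
proof (cases m)
  case (Suc k)
  then have "{1..<m} = {1..k}" by auto
  then show ?thesis using sum_id1[of k] Suc by (simp add: algebra_simps)
qed simp

lemma perk:
  fixes f :: "nat \<Rightarrow> nat \<Rightarrow> int"
  assumes f0a: "\<And>a. a \<le> n \<Longrightarrow> f a 0 = 0" and f0b: "\<And>b. b \<le> n \<Longrightarrow> f 0 b = 0"
    and fna: "\<And>a. a \<le> n \<Longrightarrow> f a n = int a * K" and fnb: "\<And>b. b \<le> n \<Longrightarrow> f n b = int b * K"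
  shows "(\<Sum>i\<in>{1..n}. \<Sum>j\<in>{1..n}. (int i - int j)^2 * (f i j - f (i-1) j - f i (j-1) + f (i-1) (j-1)))
     = 2 * K * (\<Sum>i\<in>{1..n}. int i ^ 2) - 2 * int n ^ 2 * K - 2 * (\<Sum>i\<in>{1..<n}. \<Sum>j\<in>{1..<n}. f i j)"
proof -
  define B where "B i j = f i j - f (i-1) j - f i (j-1) + f (i-1) (j-1)" for i j
  have split: "(int i - int j)^2 * B i j = int i ^ 2 * B i j + int j ^ 2 * B i j - 2 * (int i * (int j * B i j))" for i j
    by (simp add: algebra_simps power2_eq_square)
  have rowB: "(\<Sum>j\<in>{1..n}. B i j) = K" if "i \<in> {1..n}" for i
  proof -
    have "(\<Sum>j\<in>{1..n}. B i j) = (\<Sum>j\<in>{1..n}. (f i j - f (i-1) j) - (f i (j-1) - f (i-1) (j-1)))"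
      unfolding B_def by (simp add: algebra_simps)
    also have "\<dots> = (f i n - f (i-1) n) - (f i 0 - f (i-1) 0)" by (rule tele)
    also have "\<dots> = K"
    proof -
      have "i - 1 \<le> n" "i \<le> n" "1 \<le> i" using that by auto
      then show ?thesis using f0a fna by (simp add: of_nat_diff algebra_simps)
    qed
    finally show ?thesis .
  qed
  have colB: "(\<Sum>i\<in>{1..n}. B i j) = K" if "j \<in> {1..n}" for j
  proof -
    have "(\<Sum>i\<in>{1..n}. B i j) = (\<Sum>i\<in>{1..n}. (f i j - f i (j-1)) - (f (i-1) j - f (i-1) (j-1)))"
      unfolding B_def by (simp add: algebra_simps)
    also have "\<dots> = (f n j - f n (j-1)) - (f 0 j - f 0 (j-1))" by (rule tele)
    also have "\<dots> = K"
    proof -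
      have "j - 1 \<le> n" "j \<le> n" "1 \<le> j" using that by auto
      then show ?thesis using f0b fnb by (simp add: of_nat_diff algebra_simps)
    qed
    finally show ?thesis .
  qed
  have A: "(\<Sum>i\<in>{1..n}. \<Sum>j\<in>{1..n}. int i ^ 2 * B i j) = K * (\<Sum>i\<in>{1..n}. int i ^ 2)"
  proof -
    have "(\<Sum>i\<in>{1..n}. \<Sum>j\<in>{1..n}. int i ^ 2 * B i j) = (\<Sum>i\<in>{1..n}. int i ^ 2 * (\<Sum>j\<in>{1..n}. B i j))"
      by (simp add: sum_distrib_left)
    also have "\<dots> = (\<Sum>i\<in>{1..n}. int i ^ 2 * K)" by (intro sum.cong refl) (metis rowB)
    also have "\<dots> = K * (\<Sum>i\<in>{1..n}. int i ^ 2)" by (simp add: sum_distrib_left mult.commute)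
    finally show ?thesis .
  qed
  have Bq: "(\<Sum>i\<in>{1..n}. \<Sum>j\<in>{1..n}. int j ^ 2 * B i j) = K * (\<Sum>j\<in>{1..n}. int j ^ 2)"
  proof -
    have "(\<Sum>i\<in>{1..n}. \<Sum>j\<in>{1..n}. int j ^ 2 * B i j) = (\<Sum>j\<in>{1..n}. \<Sum>i\<in>{1..n}. int j ^ 2 * B i j)"
      by (rule sum.swap)
    also have "\<dots> = (\<Sum>j\<in>{1..n}. int j ^ 2 * (\<Sum>i\<in>{1..n}. B i j))"
      by (simp add: sum_distrib_left)
    also have "\<dots> = (\<Sum>j\<in>{1..n}. int j ^ 2 * K)" by (intro sum.cong refl) (metis colB)
    also have "\<dots> = K * (\<Sum>j\<in>{1..n}. int j ^ 2)" by (simp add: sum_distrib_left mult.commute)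
    finally show ?thesis .
  qed
  have inner: "(\<Sum>j\<in>{1..n}. int j * B i j) = int n * K - (\<Sum>j\<in>{1..<n}. f i j - f (i-1) j)" if "i \<in> {1..n}" for i
  proof -
    have "(\<Sum>j\<in>{1..n}. int j * B i j) = (\<Sum>j\<in>{1..n}. int j * ((f i j - f (i-1) j) - (f i (j-1) - f (i-1) (j-1))))"
      unfolding B_def by (simp add: algebra_simps)
    also have "\<dots> = int n * (f i n - f (i-1) n) - (\<Sum>j\<in>{0..<n}. f i j - f (i-1) j)" by (rule abel)
    also have "(\<Sum>j\<in>{0..<n}. f i j - f (i-1) j) = (\<Sum>j\<in>{1..<n}. f i j - f (i-1) j)"
    proof (cases n)
      case (Suc m)
      have "{0..<n} = insert 0 {1..<n}" using Suc by auto
      moreover have "i - 1 \<le> n" "i \<le> n" using that by auto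
      ultimately show ?thesis using f0a by simp
    qed simp
    also have "f i n - f (i-1) n = K"
    proof -
      have "i - 1 \<le> n" "i \<le> n" "1 \<le> i" using that by auto
      then show ?thesis using fna by (simp add: of_nat_diff algebra_simps)
    qed
    finally show ?thesis .
  qed
  have colsum: "(\<Sum>i\<in>{1..n}. int i * (f i j - f (i-1) j)) = int n * (int j * K) - (\<Sum>i\<in>{1..<n}. f i j)"
    if "j \<in> {1..<n}" for j
  proof -
    have "(\<Sum>i\<in>{1..n}. int i * (f i j - f (i-1) j)) = int n * f n j - (\<Sum>i\<in>{0..<n}. f i j)" by (rule abel)
    also have "(\<Sum>i\<in>{0..<n}. f i j) = (\<Sum>i\<in>{1..<n}. f i j)"
    proof (cases n)
      case (Suc m)
      have "{0..<n} = insert 0 {1..<n}" using Suc by auto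
      then show ?thesis using that f0b by simp
    qed simp
    finally show ?thesis using fnb that by simp
  qed
  have Cq: "(\<Sum>i\<in>{1..n}. \<Sum>j\<in>{1..n}. int i * (int j * B i j))
       = int n ^ 2 * K + (\<Sum>i\<in>{1..<n}. \<Sum>j\<in>{1..<n}. f i j)"
  proof -
    have "(\<Sum>i\<in>{1..n}. \<Sum>j\<in>{1..n}. int i * (int j * B i j)) = (\<Sum>i\<in>{1..n}. int i * (\<Sum>j\<in>{1..n}. int j * B i j))"
      by (simp add: sum_distrib_left)
    also have "\<dots> = (\<Sum>i\<in>{1..n}. int i * (int n * K) - (\<Sum>j\<in>{1..<n}. int i * (f i j - f (i-1) j)))"
    proof (intro sum.cong refl)
      fix i assume i: "i \<in> {1..n}"
      show "int i * (\<Sum>j\<in>{1..n}. int j * B i j) = int i * (int n * K) - (\<Sum>j\<in>{1..<n}. int i * (f i j - f (i-1) j))"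
        unfolding inner[OF i] by (simp add: sum_distrib_left right_diff_distrib)
    qed
    also have "\<dots> = (\<Sum>i\<in>{1..n}. int i * (int n * K)) - (\<Sum>i\<in>{1..n}. \<Sum>j\<in>{1..<n}. int i * (f i j - f (i-1) j))"
      by (rule sum_subtractf)
    also have "(\<Sum>i\<in>{1..n}. \<Sum>j\<in>{1..<n}. int i * (f i j - f (i-1) j)) = (\<Sum>j\<in>{1..<n}. \<Sum>i\<in>{1..n}. int i * (f i j - f (i-1) j))"
      by (rule sum.swap)
    also have "(\<Sum>i\<in>{1..n}. int i * (int n * K)) = int n * K * (\<Sum>i\<in>{1..n}. int i)"
      by (simp add: sum_distrib_left sum_distrib_right mult.commute)
    also have "(\<Sum>j\<in>{1..<n}. \<Sum>i\<in>{1..n}. int i * (f i j - f (i-1) j)) = (\<Sum>j\<in>{1..<n}. int n * (int j * K) - (\<Sum>i\<in>{1..<n}. f i j))"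
      by (intro sum.cong refl) (metis colsum)
    also have "\<dots> = (\<Sum>j\<in>{1..<n}. int n * (int j * K)) - (\<Sum>j\<in>{1..<n}. \<Sum>i\<in>{1..<n}. f i j)"
      by (rule sum_subtractf)
    also have "(\<Sum>j\<in>{1..<n}. \<Sum>i\<in>{1..<n}. f i j) = (\<Sum>i\<in>{1..<n}. \<Sum>j\<in>{1..<n}. f i j)"
      by (rule sum.swap)
    also have "(\<Sum>j\<in>{1..<n}. int n * (int j * K)) = int n * K * (\<Sum>j\<in>{1..<n}. int j)"
      by (simp add: sum_distrib_left sum_distrib_right mult.commute mult.left_commute)
    finally have "(\<Sum>i\<in>{1..n}. \<Sum>j\<in>{1..n}. int i * (int j * B i j))
      = int n * K * ((\<Sum>i\<in>{1..n}. int i) - (\<Sum>j\<in>{1..<n}. int j)) + (\<Sum>i\<in>{1..<n}. \<Sum>j\<in>{1..<n}. f i j)"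
      by (simp add: algebra_simps)
    moreover have "(\<Sum>i\<in>{1..n}. int i) - (\<Sum>j\<in>{1..<n}. int j) = int n"
      using sum_id1[of n] sum_id1'[of n] by (simp add: algebra_simps)
    ultimately show ?thesis by (simp add: power2_eq_square algebra_simps)
  qed
  have "(\<Sum>i\<in>{1..n}. \<Sum>j\<in>{1..n}. (int i - int j)^2 * B i j)
     = (\<Sum>i\<in>{1..n}. \<Sum>j\<in>{1..n}. int i ^ 2 * B i j) + (\<Sum>i\<in>{1..n}. \<Sum>j\<in>{1..n}. int j ^ 2 * B i j)
       - 2 * (\<Sum>i\<in>{1..n}. \<Sum>j\<in>{1..n}. int i * (int j * B i j))"
    by (simp add: split sum.distrib sum_subtractf sum_distrib_left)
  also have "\<dots> = 2 * K * (\<Sum>i\<in>{1..n}. int i ^ 2) - 2 * int n ^ 2 * K - 2 * (\<Sum>i\<in>{1..<n}. \<Sum>j\<in>{1..<n}. f i j)"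
    unfolding A Bq Cq by (simp add: algebra_simps)
  finally show ?thesis unfolding B_def .
qed


lemma sum_sq1: "6 * (\<Sum>i\<in>{1..n}. int i ^ 2) = int n * (int n + 1) * (2 * int n + 1)"
  by (induction n) (simp_all add: algebra_simps power2_eq_square)

lemma D_identity:
  assumes C: "C \<in> CSH n"
  shows "6 * (\<Sum>i\<in>{1..n}. \<Sum>j\<in>{1..n}. (int i - int j)^2 * (int n - (\<Sum>k\<in>{1..n}. int k * Xi_inv C i j k)))
     = int n ^ 2 * (int n - 1) ^ 2 * (2 * int n - 1) - 12 * Phi n C"
proof -
  define B where "B i j k = C i j k - C (i-1) j k - C i (j-1) k + C (i-1) (j-1) k" for i j k
  have L: "int n - (\<Sum>k\<in>{1..n}. int k * Xi_inv C i j k) = (\<Sum>k\<in>{1..<n}. B i j k)"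
    if ij: "i \<in> {1..n}" "j \<in> {1..n}" for i j
  proof -
    have ii: "i \<le> n" "j \<le> n" "i - 1 \<le> n" "j - 1 \<le> n" "1 \<le> i" "1 \<le> j" using ij by auto
    have xi: "Xi_inv C i j k = B i j k - B i j (k-1)" for k unfolding Xi_inv_def B_def by (simp add: algebra_simps)
    have "(\<Sum>k\<in>{1..n}. int k * Xi_inv C i j k) = int n * B i j n - (\<Sum>k\<in>{0..<n}. B i j k)" unfolding xi by (rule abel)
    moreover have "B i j n = 1"
    proof -
      have "B i j n = int (i*j) - int ((i-1)*j) - int (i*(j-1)) + int ((i-1)*(j-1))"
        unfolding B_def using CSH_D(3)[OF C] ii by simp
      also have "\<dots> = int i * int j - (int i - 1) * int j - int i * (int j - 1) + (int i - 1) * (int j - 1)"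
        using ii by (simp only: of_nat_mult of_nat_diff of_nat_1)
      also have "\<dots> = 1" by (simp add: algebra_simps)
      finally show ?thesis .
    qed
    moreover have "B i j 0 = 0" unfolding B_def using CSH_D(2)[OF C] ii by simp
    moreover have "{0..<n} = insert 0 {1..<n}" using ii by auto
    ultimately show ?thesis by simp
  qed
  have perk': "(\<Sum>i\<in>{1..n}. \<Sum>j\<in>{1..n}. (int i - int j)^2 * B i j k)
     = 2 * int k * (\<Sum>i\<in>{1..n}. int i ^ 2) - 2 * int n ^ 2 * int k - 2 * (\<Sum>i\<in>{1..<n}. \<Sum>j\<in>{1..<n}. C i j k)"
    if k: "k \<in> {1..<n}" for k
    unfolding B_def
  proof (rule perk[where f = "\<lambda>a b. C a b k"])
    have kn: "k \<le> n" using k by auto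
    show "\<And>a. a \<le> n \<Longrightarrow> C a 0 k = 0" using CSH_D(2)[OF C] kn by blast
    show "\<And>b. b \<le> n \<Longrightarrow> C 0 b k = 0" using CSH_D(2)[OF C] kn by blast
    show "\<And>a. a \<le> n \<Longrightarrow> C a n k = int a * int k" using CSH_D(3)[OF C] kn by simp
    show "\<And>b. b \<le> n \<Longrightarrow> C n b k = int b * int k" using CSH_D(3)[OF C] kn by simp
  qed
  have "(\<Sum>i\<in>{1..n}. \<Sum>j\<in>{1..n}. (int i - int j)^2 * (int n - (\<Sum>k\<in>{1..n}. int k * Xi_inv C i j k)))
     = (\<Sum>i\<in>{1..n}. \<Sum>j\<in>{1..n}. \<Sum>k\<in>{1..<n}. (int i - int j)^2 * B i j k)"
  proof (intro sum.cong refl)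
    fix i j assume i: "i \<in> {1..n}" and j: "j \<in> {1..n}"
    show "(int i - int j)^2 * (int n - (\<Sum>k\<in>{1..n}. int k * Xi_inv C i j k)) = (\<Sum>k\<in>{1..<n}. (int i - int j)^2 * B i j k)"
      unfolding L[OF i j] by (simp add: sum_distrib_left)
  qed
  also have "\<dots> = (\<Sum>i\<in>{1..n}. \<Sum>k\<in>{1..<n}. \<Sum>j\<in>{1..n}. (int i - int j)^2 * B i j k)"
    by (rule sum.cong[OF refl]) (rule sum.swap)
  also have "\<dots> = (\<Sum>k\<in>{1..<n}. \<Sum>i\<in>{1..n}. \<Sum>j\<in>{1..n}. (int i - int j)^2 * B i j k)"
    by (rule sum.swap)
  also have "\<dots> = (\<Sum>k\<in>{1..<n}. 2 * int k * (\<Sum>i\<in>{1..n}. int i ^ 2) - 2 * int n ^ 2 * int k - 2 * (\<Sum>i\<in>{1..<n}. \<Sum>j\<in>{1..<n}. C i j k))"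
    by (rule sum.cong[OF refl]) (rule perk')
  also have "\<dots> = (2 * (\<Sum>i\<in>{1..n}. int i ^ 2) - 2 * int n ^ 2) * (\<Sum>k\<in>{1..<n}. int k) - 2 * (\<Sum>k\<in>{1..<n}. \<Sum>i\<in>{1..<n}. \<Sum>j\<in>{1..<n}. C i j k)"
  proof -
    define S where "S = (\<Sum>i\<in>{1..n}. int i ^ 2)"
    define P where "P k = (\<Sum>i\<in>{1..<n}. \<Sum>j\<in>{1..<n}. C i j k)" for k
    have "(\<Sum>k\<in>{1..<n}. 2 * int k * S - 2 * int n ^ 2 * int k - 2 * P k) = (\<Sum>k\<in>{1..<n}. (2 * S - 2 * int n ^ 2) * int k - 2 * P k)"
      by (rule sum.cong[OF refl]) (simp add: algebra_simps)
    also have "\<dots> = (2 * S - 2 * int n ^ 2) * (\<Sum>k\<in>{1..<n}. int k) - 2 * (\<Sum>k\<in>{1..<n}. P k)"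
      by (simp only: sum_subtractf sum_distrib_left)
    finally show ?thesis unfolding S_def P_def .
  qed
  also have "(\<Sum>k\<in>{1..<n}. \<Sum>i\<in>{1..<n}. \<Sum>j\<in>{1..<n}. C i j k) = Phi n C"
  proof -
    have "(\<Sum>k\<in>{1..<n}. \<Sum>i\<in>{1..<n}. \<Sum>j\<in>{1..<n}. C i j k) = (\<Sum>i\<in>{1..<n}. \<Sum>k\<in>{1..<n}. \<Sum>j\<in>{1..<n}. C i j k)"
      by (rule sum.swap)
    also have "\<dots> = (\<Sum>i\<in>{1..<n}. \<Sum>j\<in>{1..<n}. \<Sum>k\<in>{1..<n}. C i j k)"
      by (rule sum.cong[OF refl]) (rule sum.swap)
    finally show ?thesis unfolding Phi_def .
  qed
  finally have e: "(\<Sum>i\<in>{1..n}. \<Sum>j\<in>{1..n}. (int i - int j)^2 * (int n - (\<Sum>k\<in>{1..n}. int k * Xi_inv C i j k)))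
     = (2 * (\<Sum>i\<in>{1..n}. int i ^ 2) - 2 * int n ^ 2) * (\<Sum>k\<in>{1..<n}. int k) - 2 * Phi n C" .
  have s2: "6 * (\<Sum>i\<in>{1..n}. int i ^ 2) = int n * (int n + 1) * (2 * int n + 1)" by (rule sum_sq1)
  have s1: "2 * (\<Sum>i\<in>{1..<n}. int i) = int n * (int n - 1)" by (rule sum_id1')
  have poly: "\<And>S Q P x::int. 6 * S = x * (x + 1) * (2 * x + 1) \<Longrightarrow> 2 * Q = x * (x - 1) \<Longrightarrow>
      6 * ((2 * S - 2 * x ^ 2) * Q - 2 * P) = x ^ 2 * (x - 1) ^ 2 * (2 * x - 1) - 12 * P"
    by algebra
  show ?thesis unfolding e by (rule poly[OF s2 s1])
qed


lemma ramp: "c \<le> m \<Longrightarrow> 2 * (\<Sum>k\<in>{1..m}. max 0 (int k - int c)) = int (m - c) * int (m - c + 1)"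
proof (induction m)
  case 0 then show ?case by simp
next
  case (Suc m)
  show ?case
  proof (cases "c \<le> m")
    case True
    have "2 * (\<Sum>k\<in>{1..Suc m}. max 0 (int k - int c)) = 2 * (\<Sum>k\<in>{1..m}. max 0 (int k - int c)) + 2 * max 0 (int (Suc m) - int c)"
      by simp
    also have "\<dots> = int (m - c) * int (m - c + 1) + 2 * (int (m - c) + 1)" using Suc.IH True by simp
    also have "\<dots> = int (Suc m - c) * int (Suc m - c + 1)" using True by (simp add: Suc_diff_le algebra_simps)
    finally show ?thesis .
  next
    case False
    then have c: "c = Suc m" using Suc.prems by simp
    have "(\<Sum>k\<in>{1..Suc m}. max 0 (int k - int c)) = 0" using c by (intro sum.neutral) auto
    then show ?thesis using c by simp
  qed
qed

lemma E1:
  assumes i: "i \<in> {1..<n}" and j: "j \<in> {1..<n}"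
  shows "2 * (\<Sum>k\<in>{1..<n}. Mx n i j k) = int n * (int n - 1) * int (min i j) - psi (min i j) (n - max i j)"
proof -
  define p where "p = min i j"
  define q where "q = max i j"
  define U where "U = max p (n - q)"
  define L where "L = min p (n - q)"
  define c where "c = n - U"
  have pq: "1 \<le> p" "p \<le> q" "q < n" "1 \<le> U" "U < n" using i j unfolding p_def q_def U_def by auto
  have f: "Mx n i j k = int k * int p - int L * max 0 (int k - int c)" if "k \<in> {1..<n}" for k
  proof -
    have "Mx n i j k = int k * int p - max 0 (int k + int U - int n) * int L"
      unfolding p_def q_def U_def L_def using Mx_formula[of i n j k] i j that by simp
    moreover have "int k + int U - int n = int k - int c" unfolding c_def using pq by simp
    ultimately show ?thesis by (simp add: mult.commute)
  qed
  have "(\<Sum>k\<in>{1..<n}. Mx n i j k) = (\<Sum>k\<in>{1..<n}. int p * int k - int L * max 0 (int k - int c))"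
    by (rule sum.cong[OF refl]) (simp add: f mult.commute)
  also have "\<dots> = int p * (\<Sum>k\<in>{1..<n}. int k) - int L * (\<Sum>k\<in>{1..<n}. max 0 (int k - int c))"
    by (simp only: sum_subtractf sum_distrib_left)
  finally have e: "2 * (\<Sum>k\<in>{1..<n}. Mx n i j k) = int p * (2 * (\<Sum>k\<in>{1..<n}. int k)) - int L * (2 * (\<Sum>k\<in>{1..<n}. max 0 (int k - int c)))"
    by (simp add: algebra_simps)
  have s1: "2 * (\<Sum>k\<in>{1..<n}. int k) = int n * (int n - 1)" by (rule sum_id1')
  have s2: "2 * (\<Sum>k\<in>{1..<n}. max 0 (int k - int c)) = (int U - 1) * int U"
  proof -
    have "{1..<n} = {1..n-1}" using pq by auto
    moreover have "c \<le> n - 1" unfolding c_def using pq by simp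
    moreover have "int (n - 1 - c) = int U - 1" "int (n - 1 - c + 1) = int U" unfolding c_def using pq by auto
    ultimately show ?thesis using ramp[of c "n-1"] by simp
  qed
  have LU: "int L * int U = int p * int (n - q)" unfolding L_def U_def by (cases "p \<le> n - q") (auto simp: mult.commute)
  have ps: "psi p (n - q) = int p * int (n - q) * (int U - 1)" unfolding psi_def U_def ..
  show ?thesis unfolding p_def[symmetric] q_def[symmetric] e s1 s2 ps
    using LU by (simp add: algebra_simps)
qed

lemma sum_min: "6 * (\<Sum>i<n. \<Sum>j<n. int (min i j)) = (int n - 1) * int n * (2 * int n - 1)"
proof (induction n)
  case 0 then show ?case by simp
next
  case (Suc n)
  have a: "(\<Sum>j<n. int (min n j)) = (\<Sum>j<n. int j)" by (rule sum.cong) auto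
  have b: "(\<Sum>i<n. int (min i n)) = (\<Sum>j<n. int j)" by (rule sum.cong) auto
  have c: "2 * (\<Sum>j<n. int j) = int n * (int n - 1)"
    by (induction n) (auto simp: algebra_simps)
  have "(\<Sum>i<Suc n. \<Sum>j<Suc n. int (min i j)) = (\<Sum>i<n. \<Sum>j<n. int (min i j)) + (\<Sum>i<n. int (min i n)) + (\<Sum>j<n. int (min n j)) + int n"
    by (simp add: sum.distrib)
  then have "6 * (\<Sum>i<Suc n. \<Sum>j<Suc n. int (min i j)) = 6 * (\<Sum>i<n. \<Sum>j<n. int (min i j)) + 6 * (2 * (\<Sum>j<n. int j)) + 6 * int n"
    unfolding a b by (simp add: algebra_simps)
  then show ?case unfolding Suc.IH c by (simp add: algebra_simps)
qed

lemma sum_min1: "6 * (\<Sum>i\<in>{1..<n}. \<Sum>j\<in>{1..<n}. int (min i j)) = (int n - 1) * int n * (2 * int n - 1)"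
proof -
  have "(\<Sum>i\<in>{1..<n}. \<Sum>j\<in>{1..<n}. int (min i j)) = (\<Sum>i<n. \<Sum>j<n. int (min i j))"
  proof (cases n)
    case (Suc m)
    have e: "{..<n} = insert 0 {1..<n}" using Suc by auto
    have "(\<Sum>j<n. int (min i j)) = (\<Sum>j\<in>{1..<n}. int (min i j))" for i unfolding e by simp
    then show ?thesis unfolding e by simp
  qed simp
  then show ?thesis using sum_min by simp
qed

lemma sym_sum:
  fixes g :: "nat \<Rightarrow> nat \<Rightarrow> int"
  assumes sym: "\<And>i j. g i j = g j i"
  shows "(\<Sum>i\<in>{0..N}. \<Sum>j\<in>{0..N}. g i j) = (\<Sum>p\<in>{0..N}. g p p) + 2 * (\<Sum>p\<in>{0..N}. \<Sum>q\<in>{Suc p..N}. g p q)"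
proof (induction N)
  case 0 then show ?case by simp
next
  case (Suc N)
  have in1: "(\<Sum>q\<in>{Suc p..Suc N}. g p q) = (\<Sum>q\<in>{Suc p..N}. g p q) + g p (Suc N)" if "p \<in> {0..N}" for p
  proof -
    have "{Suc p..Suc N} = insert (Suc N) {Suc p..N}" using that by auto
    then show ?thesis by simp
  qed
  have "(\<Sum>p\<in>{0..Suc N}. \<Sum>q\<in>{Suc p..Suc N}. g p q) = (\<Sum>p\<in>{0..N}. \<Sum>q\<in>{Suc p..Suc N}. g p q)"
    by simp
  also have "\<dots> = (\<Sum>p\<in>{0..N}. \<Sum>q\<in>{Suc p..N}. g p q) + (\<Sum>p\<in>{0..N}. g p (Suc N))"
    by (simp add: in1 sum.distrib)
  finally have r: "(\<Sum>p\<in>{0..Suc N}. \<Sum>q\<in>{Suc p..Suc N}. g p q) = (\<Sum>p\<in>{0..N}. \<Sum>q\<in>{Suc p..N}. g p q) + (\<Sum>p\<in>{0..N}. g p (Suc N))" .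
  have l: "(\<Sum>i\<in>{0..Suc N}. \<Sum>j\<in>{0..Suc N}. g i j) = (\<Sum>i\<in>{0..N}. \<Sum>j\<in>{0..N}. g i j) + (\<Sum>i\<in>{0..N}. g i (Suc N)) + (\<Sum>j\<in>{0..N}. g (Suc N) j) + g (Suc N) (Suc N)"
    by (simp add: sum.distrib)
  have s: "(\<Sum>j\<in>{0..N}. g (Suc N) j) = (\<Sum>p\<in>{0..N}. g p (Suc N))" using sym by simp
  show ?case unfolding l r s Suc.IH by simp
qed

lemma regroup:
  fixes g :: "nat \<Rightarrow> nat \<Rightarrow> int"
  shows "(\<Sum>p\<in>{0..n}. \<Sum>r<n - p. g p r) = (\<Sum>s<n. \<Sum>p\<in>{0..s}. g p (s - p))"
proof (induction n)
  case 0 then show ?case by simp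
next
  case (Suc n)
  have "(\<Sum>p\<in>{0..Suc n}. \<Sum>r<Suc n - p. g p r) = (\<Sum>p\<in>{0..n}. \<Sum>r<Suc n - p. g p r)" by simp
  also have "\<dots> = (\<Sum>p\<in>{0..n}. (\<Sum>r<n - p. g p r) + g p (n - p))"
    by (rule sum.cong[OF refl]) (simp add: Suc_diff_le)
  also have "\<dots> = (\<Sum>p\<in>{0..n}. \<Sum>r<n - p. g p r) + (\<Sum>p\<in>{0..n}. g p (n - p))" by (rule sum.distrib)
  finally show ?case using Suc.IH by simp
qed

lemma reindex_rev: "(\<Sum>q\<in>{Suc p..n}. h (n - q)) = (\<Sum>r<n - p. (h r :: int))"
  by (rule sum.reindex_bij_witness[of _ "\<lambda>r. n - r" "\<lambda>q. n - q"]) auto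


lemma ends0:
  fixes h :: "nat \<Rightarrow> int"
  assumes "h 0 = 0" "h n = 0"
  shows "(\<Sum>i\<in>{0..n}. h i) = (\<Sum>i\<in>{1..<n}. h i)"
proof (cases n)
  case 0 then show ?thesis using assms by simp
next
  case (Suc m)
  then have e: "{0..n} = insert 0 (insert n {1..<n})" by auto
  show ?thesis unfolding e using assms Suc by simp
qed

lemma psi_sum: "(\<Sum>i\<in>{1..<n}. \<Sum>j\<in>{1..<n}. psi (min i j) (n - max i j)) = Psi n + 2 * SP n"
proof -
  define d where "d i j = psi (min i j) (n - max i j)" for i j
  have psi0: "psi 0 r = 0" "psi r 0 = 0" for r unfolding psi_def by auto
  have inner: "(\<Sum>j\<in>{0..n}. d i j) = (\<Sum>j\<in>{1..<n}. d i j)" if "i \<le> n" for i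
    by (rule ends0) (use that in \<open>auto simp: d_def psi0 max_def\<close>)
  have "(\<Sum>i\<in>{0..n}. \<Sum>j\<in>{0..n}. d i j) = (\<Sum>i\<in>{1..<n}. \<Sum>j\<in>{0..n}. d i j)"
    by (rule ends0) (auto simp: d_def psi0 max_def intro!: sum.neutral)
  also have "\<dots> = (\<Sum>i\<in>{1..<n}. \<Sum>j\<in>{1..<n}. d i j)"
    by (rule sum.cong[OF refl]) (simp add: inner)
  finally have a: "(\<Sum>i\<in>{1..<n}. \<Sum>j\<in>{1..<n}. d i j) = (\<Sum>i\<in>{0..n}. \<Sum>j\<in>{0..n}. d i j)" by simp
  have "(\<Sum>i\<in>{0..n}. \<Sum>j\<in>{0..n}. d i j) = (\<Sum>p\<in>{0..n}. d p p) + 2 * (\<Sum>p\<in>{0..n}. \<Sum>q\<in>{Suc p..n}. d p q)"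
    by (rule sym_sum) (simp add: d_def min.commute max.commute)
  also have "(\<Sum>p\<in>{0..n}. d p p) = Psi n" unfolding d_def Psi_def by simp
  also have "(\<Sum>p\<in>{0..n}. \<Sum>q\<in>{Suc p..n}. d p q) = (\<Sum>p\<in>{0..n}. \<Sum>q\<in>{Suc p..n}. psi p (n - q))"
    by (intro sum.cong refl) (auto simp: d_def min_def max_def)
  also have "\<dots> = (\<Sum>p\<in>{0..n}. \<Sum>r<n - p. psi p r)"
    by (rule sum.cong[OF refl]) (rule reindex_rev)
  also have "\<dots> = SP n" unfolding regroup SP_def Psi_def ..
  finally show ?thesis using a unfolding d_def by simp
qed

lemma Phi_Mx: "3840 * Phi n (Mx n) = 8 * (-11 * int n ^ 5 + 20 * int n ^ 4 + 10 * int n ^ 3 - 20 * int n ^ 2)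
   + 4 * (17 + 15 * (-1) ^ n) * int n + 320 * int n ^ 2 * (int n - 1) ^ 2 * (2 * int n - 1)"
proof -
  have "2 * Phi n (Mx n) = (\<Sum>i\<in>{1..<n}. \<Sum>j\<in>{1..<n}. 2 * (\<Sum>k\<in>{1..<n}. Mx n i j k))"
    unfolding Phi_def by (simp add: sum_distrib_left)
  also have "\<dots> = (\<Sum>i\<in>{1..<n}. \<Sum>j\<in>{1..<n}. int n * (int n - 1) * int (min i j) - psi (min i j) (n - max i j))"
    by (intro sum.cong refl) (rule E1)
  also have "\<dots> = int n * (int n - 1) * (\<Sum>i\<in>{1..<n}. \<Sum>j\<in>{1..<n}. int (min i j)) - (Psi n + 2 * SP n)"
    unfolding psi_sum[symmetric] by (simp only: sum_subtractf sum_distrib_left)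
  finally have e: "2 * Phi n (Mx n) = int n * (int n - 1) * (\<Sum>i\<in>{1..<n}. \<Sum>j\<in>{1..<n}. int (min i j)) - (Psi n + 2 * SP n)" .
  have poly: "\<And>x e F M P S :: int. 2 * F = x * (x - 1) * M - (P + 2 * S) \<Longrightarrow> 6 * M = (x - 1) * x * (2 * x - 1)
     \<Longrightarrow> 192 * P = 3 + 32 * x - 34 * x ^ 2 - 32 * x ^ 3 + 22 * x ^ 4 + e * (-3 - 6 * x ^ 2)
     \<Longrightarrow> 1920 * S = -15 - 194 * x + 250 * x ^ 2 + 120 * x ^ 3 - 190 * x ^ 4 + 44 * x ^ 5 + e * (15 - 30 * x + 30 * x ^ 2)
     \<Longrightarrow> 3840 * F = 8 * (-11 * x ^ 5 + 20 * x ^ 4 + 10 * x ^ 3 - 20 * x ^ 2) + 4 * (17 + 15 * e) * x + 320 * x ^ 2 * (x - 1) ^ 2 * (2 * x - 1)"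
    by algebra
  show ?thesis by (rule poly[OF e sum_min1 Psi_closed SP_closed])
qed


theorem mainTheorem12:
  fixes n :: nat and C :: hmat and S :: "hmat set"
  assumes "C \<in> CSH n"
    and "maximal_chain_to n C S"
  shows "real (card S) - 1 =
     (- 11 * real n ^ 5 + 20 * real n ^ 4 + 10 * real n ^ 3 - 20 * real n ^ 2
        + (4::real) powi (1 + (-1::int) ^ n) * real n) / 480
     + 1/2 * (\<Sum>i\<in>{1..n}. \<Sum>j\<in>{1..n}.
          (real i - real j) ^ 2 *
          (real n - real_of_int (\<Sum>k\<in>{1..n}. int k * Xi_inv C i j k)))"
proof -
  define X where "X = Phi n (Mx n)"
  define Y where "Y = Phi n C"
  define Z where "Z = (\<Sum>i\<in>{1..n}. \<Sum>j\<in>{1..n}. (int i - int j)^2 * (int n - (\<Sum>k\<in>{1..n}. int k * Xi_inv C i j k)))"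
  define c :: int where "c = (if even n then 16 else 1)"
  have card: "int (card S) = X - Y + 1" unfolding X_def Y_def by (rule chain_card[OF assms])
  have hx: "3840 * X = 8 * (-11 * int n ^ 5 + 20 * int n ^ 4 + 10 * int n ^ 3 - 20 * int n ^ 2)
     + 4 * (17 + 15 * (-1) ^ n) * int n + 320 * int n ^ 2 * (int n - 1) ^ 2 * (2 * int n - 1)"
    unfolding X_def by (rule Phi_Mx)
  have hz: "6 * Z = int n ^ 2 * (int n - 1) ^ 2 * (2 * int n - 1) - 12 * Y"
    unfolding Z_def Y_def by (rule D_identity[OF assms(1)])
  have hc: "2 * c = 17 + 15 * (-1) ^ n" unfolding c_def by simp
  have poly: "\<And>x e c X Y Z :: int. 3840 * X = 8 * (-11 * x ^ 5 + 20 * x ^ 4 + 10 * x ^ 3 - 20 * x ^ 2)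
     + 4 * (17 + 15 * e) * x + 320 * x ^ 2 * (x - 1) ^ 2 * (2 * x - 1) \<Longrightarrow>
     6 * Z = x ^ 2 * (x - 1) ^ 2 * (2 * x - 1) - 12 * Y \<Longrightarrow> 2 * c = 17 + 15 * e \<Longrightarrow>
     960 * (X - Y) = 2 * (-11 * x ^ 5 + 20 * x ^ 4 + 10 * x ^ 3 - 20 * x ^ 2) + 2 * c * x + 480 * Z"
    by algebra
  have key: "960 * (X - Y) = 2 * (-11 * int n ^ 5 + 20 * int n ^ 4 + 10 * int n ^ 3 - 20 * int n ^ 2) + 2 * c * int n + 480 * Z"
    by (rule poly[OF hx hz hc])
  have keyr: "960 * real_of_int (X - Y) = 2 * (-11 * real n ^ 5 + 20 * real n ^ 4 + 10 * real n ^ 3 - 20 * real n ^ 2) + 2 * real_of_int c * real n + 480 * real_of_int Z"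
    using arg_cong[OF key, of real_of_int] by simp
  have pw: "(4::real) powi (1 + (-1::int) ^ n) = real_of_int c"
    unfolding c_def by (cases "even n") (simp_all add: power_int_def)
  have zr: "(\<Sum>i\<in>{1..n}. \<Sum>j\<in>{1..n}. (real i - real j) ^ 2 * (real n - real_of_int (\<Sum>k\<in>{1..n}. int k * Xi_inv C i j k)))
     = real_of_int Z" unfolding Z_def by simp
  have cr: "real (card S) - 1 = real_of_int (X - Y)" using arg_cong[OF card, of real_of_int] by simp
  show ?thesis unfolding cr pw zr using keyr by (simp add: field_simps)
qed


end
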